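(* In the analytical model described in the context, assume $\max(T_1,T_2)>1$. For $U\in\{0,\dots,N_1-1\}$ and $\beta>0$ let $F(U,\beta)=b(U,T_1,T_2)\,\beta^{\min\{N_1-U,N_2\}}$. Define $U^*=N_1-N_2-1$ if $\mathcal A_2b_2(N_1-N_2-1,T_1,T_2)<\mathcal A_1b_1(N_1-N_2,T_1,T_2)+\mathcal A_2b_2(N_1-N_2,T_1,T_2)$, and $U^*=N_1-N_2$ otherwise. Then there exists $\bar\beta>0$ such that for all $\beta\in(0,\bar\beta)$, $U^*$ minimizes $F(\cdot,\beta)$ over $\{0,1,\dots,N_1-1\}$.
   Context: Parameters: integers $N_1>N_2\ge1$, $P_1,P_2>0$, $\alpha_1,\alpha_2>2$, $\lambda_1,\lambda_2>0$, $T_1,T_2\ge1$; $U$ ranges over $\{0,\dots,N_1-1\}$. $\mathcal A_1=2\pi\lambda_1\int_0^\infty z e^{-\pi\lambda_1z^2}\exp(-\pi\lambda_2(P_2/P_1)^{2/\alpha_2}z^{2\alpha_1/\alpha_2})dz$, $\mathcal A_2=2\pi\lambda_2\int_0^\infty z e^{-\pi\lambda_2z^2}\exp(-\pi\lambda_1(P_1/P_2)^{2/\alpha_1}z^{2\alpha_2/\alpha_1})dz$, $f_{Y_1}(y)=\frac{2\pi\lambda_1}{\mathcal A_1}y\exp(-\pi(\lambda_1y^2+\lambda_2(P_2/P_1)^{2/\alpha_2}y^{2\alpha_1/\alpha_2}))$, $f_{Y_2}(y)=\frac{2\pi\lambda_2}{\mathcal A_2}y\exp(-\pi(\lambda_1(P_1/P_2)^{2/\alpha_1}y^{2\alpha_2/\alpha_1}+\lambda_2y^2))$.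 $\bar L_j(T_j)=2\pi\lambda_j\int_0^\infty r\int_{(P_j/(P_1T_j))^{1/\alpha_j}r^{\alpha_1/\alpha_j}}^{(P_j/P_1)^{1/\alpha_j}r^{\alpha_1/\alpha_j}}f_{Y_j}(y)dy\,dr$, $\bar L=\bar L_1(T_1)+\bar L_2(T_2)$; $K_0\sim$ Poisson($\bar L$), $u_{\mathrm{IN},0}=\min(U,K_0)$; $p_c(U)=e^{-\bar L}(\sum_{k=0}^{U-1}\frac{\bar L^k}{k!}+U\sum_{k\ge U}\frac{\bar L^k}{(k+1)!})$, $p_{\bar c}=1-p_c$. $\mathcal N_n=\{(n_1,n_2,n_3)\in\mathbb N_0^3:\sum n_i=n\}$, $\mathcal M_n=\{(m_a)_{a=1}^n\in\mathbb N_0^n:\sum_a a\,m_a=n\}$. With $U_1=U$, $Q_1=\Pr(u_{\mathrm{IN},0}=U)$, $U_2=0$, $Q_2=1$, for $j=1,2$ $$b_j(U,T_1,T_2)=Q_j\!\!\sum_{(n_1,n_2,n_3)\in\mathcal N_{N_j-U_j}}\sum_{(m_a)\in\mathcal M_{n_1}}\sum_{(p_a)\in\mathcal M_{n_2}}\sum_{(q_a)\in\mathcal M_{n_3}}\Big(\int_0^\infty y^{\frac{2\alpha_j}{\alpha_1}(\sum m_a+\sum p_a)+\frac{2\alpha_j}{\alpha_2}\sum q_a}f_{Y_j}(y)dy\Big)\prod_{a=1}^{n_1}\frac1{m_a!}\Big(\tfrac{2\pi\lambda_1}{\alpha_1(a-2/\alpha_1)}(\tfrac{P_1}{P_j})^{2/\alpha_1}p_{\bar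 c}(1-T_j^{-(a-2/\alpha_1)})\Big)^{m_a}\prod_{a=1}^{n_2}\frac1{p_a!}\Big(\tfrac{2\pi\lambda_1}{\alpha_1(a-2/\alpha_1)}(\tfrac{P_1}{P_j})^{2/\alpha_1}T_j^{-(a-2/\alpha_1)}\Big)^{p_a}\prod_{a=1}^{n_3}\frac1{q_a!}\Big(\tfrac{2\pi\lambda_2}{\alpha_2(a-2/\alpha_2)}(\tfrac{P_2}{P_j})^{2/\alpha_2}\Big)^{q_a},$$ and $b(U,T_1,T_2)=\mathcal A_2b_2$ if $U<N_1-N_2$, $\mathcal A_1b_1+\mathcal A_2b_2$ if $U=N_1-N_2$, $\mathcal A_1b_1$ if $U>N_1-N_2$. (In the paper's model $b(U,T_1,T_2)\beta^{\min\{N_1-U,N_2\}}$ is the small-$\beta$ asymptotic of the outage probability of a user-centric interference-nulling scheme with maximum nulling degrees of freedom $U$.) *)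

theory Defs
  imports "HOL-Analysis.Analysis"
begin

text \<open>Parameters indexed by j \<in> {1,2}: P j, al j (path-loss exponents alpha_j),
  lam j (densities lambda_j), T j (thresholds), N j (antenna numbers).
  oth j denotes the other tier index.\<close>

definition oth :: "nat \<Rightarrow> nat" where "oth j = (if j = 1 then 2 else 1)"

definition Acal :: "(nat \<Rightarrow> real) \<Rightarrow> (nat \<Rightarrow> real) \<Rightarrow> (nat \<Rightarrow> real) \<Rightarrow> nat \<Rightarrow> real" where
  "Acal P al lam j = 2 * pi * lam j *
     (\<integral>z\<in>{0<..}. z * exp (- pi * lam j * z\<^sup>2) *
        exp (- pi * lam (oth j) * (P (oth j) / P j) powr (2 / al (oth j))
              * z powr (2 * al j / al (oth j))) \<partial>lborel)"

definition fY :: "(nat \<Rightarrow> real) \<Rightarrow> (nat \<Rightarrow> real) \<Rightarrow> (nat \<Rightarrow> real) \<Rightarrow> nat \<Rightarrow> real \<Rightarrow> real" where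
  "fY P al lam j y = 2 * pi * lam j / Acal P al lam j * y *
     exp (- pi * (lam j * y\<^sup>2 + lam (oth j) * (P (oth j) / P j) powr (2 / al (oth j))
              * y powr (2 * al j / al (oth j))))"

definition Lbarj :: "(nat \<Rightarrow> real) \<Rightarrow> (nat \<Rightarrow> real) \<Rightarrow> (nat \<Rightarrow> real) \<Rightarrow> nat \<Rightarrow> real \<Rightarrow> real" where
  "Lbarj P al lam j Tj = 2 * pi * lam j *
     (\<integral>r\<in>{0<..}. r *
        (\<integral>y\<in>{(P j / (P 1 * Tj)) powr (1 / al j) * r powr (al 1 / al j) ..
               (P j / P 1) powr (1 / al j) * r powr (al 1 / al j)}. fY P al lam j y \<partial>lborel)
      \<partial>lborel)"

definition Lbar :: "(nat \<Rightarrow> real) \<Rightarrow> (nat \<Rightarrow> real) \<Rightarrow> (nat \<Rightarrow> real) \<Rightarrow> (nat \<Rightarrow> real) \<Rightarrow> real" where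
  "Lbar P al lam T = Lbarj P al lam 1 (T 1) + Lbarj P al lam 2 (T 2)"

definition poisson :: "real \<Rightarrow> nat \<Rightarrow> real" where
  "poisson L k = exp (- L) * L ^ k / fact k"

text \<open>\<open>Q_1 = Pr(min(U,K_0) = U)\<close> for \<open>K_0 \<sim> Poisson(Lbar)\<close>.\<close>
definition Q1 :: "(nat \<Rightarrow> real) \<Rightarrow> (nat \<Rightarrow> real) \<Rightarrow> (nat \<Rightarrow> real) \<Rightarrow> (nat \<Rightarrow> real) \<Rightarrow> nat \<Rightarrow> real" where
  "Q1 P al lam T U = (\<Sum>k. if min U k = U then poisson (Lbar P al lam T) k else 0)"

definition pc :: "(nat \<Rightarrow> real) \<Rightarrow> (nat \<Rightarrow> real) \<Rightarrow> (nat \<Rightarrow> real) \<Rightarrow> (nat \<Rightarrow> real) \<Rightarrow> nat \<Rightarrow> real" where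
  "pc P al lam T U = (let L = Lbar P al lam T in
     exp (- L) * ((\<Sum>k<U. L ^ k / fact k)
                  + real U * (\<Sum>k. if U \<le> k then L ^ k / fact (k + 1) else 0)))"

text \<open>\<open>\<N>_n\<close>: triples summing to n; \<open>\<M>_n\<close>: tuples \<open>(m_a)_{a=1..n}\<close> with \<open>\<Sum> a m_a = n\<close>,
  represented as functions nat \<Rightarrow> nat vanishing outside {1..n}.\<close>
definition triples :: "nat \<Rightarrow> (nat \<times> nat \<times> nat) set" where
  "triples n = {(n1, n2, n3). n1 + n2 + n3 = n}"

definition parts :: "nat \<Rightarrow> (nat \<Rightarrow> nat) set" where
  "parts n = {m. (\<forall>a. m a \<noteq> 0 \<longrightarrow> 1 \<le> a \<and> a \<le> n) \<and> (\<Sum>a=1..n. a * m a) = n}"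

definition bj :: "(nat \<Rightarrow> nat) \<Rightarrow> (nat \<Rightarrow> real) \<Rightarrow> (nat \<Rightarrow> real) \<Rightarrow> (nat \<Rightarrow> real)
                   \<Rightarrow> (nat \<Rightarrow> real) \<Rightarrow> nat \<Rightarrow> nat \<Rightarrow> real" where
  "bj N P al lam T U j =
    (let Uj = (if j = 1 then U else 0);
         Qj = (if j = 1 then Q1 P al lam T U else 1);
         pbar = 1 - pc P al lam T U;
         c1 = (\<lambda>a::nat. 2 * pi * lam 1 / (al 1 * (real a - 2 / al 1)) * (P 1 / P j) powr (2 / al 1)
                  * pbar * (1 - T j powr (- (real a - 2 / al 1))));
         c2 = (\<lambda>a::nat. 2 * pi * lam 1 / (al 1 * (real a - 2 / al 1)) * (P 1 / P j) powr (2 / al 1)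
                  * T j powr (- (real a - 2 / al 1)));
         c3 = (\<lambda>a::nat. 2 * pi * lam 2 / (al 2 * (real a - 2 / al 2)) * (P 2 / P j) powr (2 / al 2))
     in Qj * (\<Sum>(n1, n2, n3)\<in>triples (N j - Uj).
               \<Sum>m\<in>parts n1. \<Sum>p\<in>parts n2. \<Sum>q\<in>parts n3.
                 (\<integral>y\<in>{0<..}. y powr (2 * al j / al 1 * real ((\<Sum>a=1..n1. m a) + (\<Sum>a=1..n2. p a))
                                      + 2 * al j / al 2 * real (\<Sum>a=1..n3. q a))
                               * fY P al lam j y \<partial>lborel)
                 * (\<Prod>a=1..n1. (1 / fact (m a)) * c1 a ^ m a)
                 * (\<Prod>a=1..n2. (1 / fact (p a)) * c2 a ^ p a)
                 * (\<Prod>a=1..n3. (1 / fact (q a)) * c3 a ^ q a)))"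

definition bfun :: "(nat \<Rightarrow> nat) \<Rightarrow> (nat \<Rightarrow> real) \<Rightarrow> (nat \<Rightarrow> real) \<Rightarrow> (nat \<Rightarrow> real)
                   \<Rightarrow> (nat \<Rightarrow> real) \<Rightarrow> nat \<Rightarrow> real" where
  "bfun N P al lam T U =
    (if U < N 1 - N 2 then Acal P al lam 2 * bj N P al lam T U 2
     else if U = N 1 - N 2 then Acal P al lam 1 * bj N P al lam T U 1 + Acal P al lam 2 * bj N P al lam T U 2
     else Acal P al lam 1 * bj N P al lam T U 1)"

definition Fout :: "(nat \<Rightarrow> nat) \<Rightarrow> (nat \<Rightarrow> real) \<Rightarrow> (nat \<Rightarrow> real) \<Rightarrow> (nat \<Rightarrow> real)
                   \<Rightarrow> (nat \<Rightarrow> real) \<Rightarrow> nat \<Rightarrow> real \<Rightarrow> real" where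
  "Fout N P al lam T U \<beta> = bfun N P al lam T U * \<beta> ^ min (N 1 - U) (N 2)"

definition Ustar :: "(nat \<Rightarrow> nat) \<Rightarrow> (nat \<Rightarrow> real) \<Rightarrow> (nat \<Rightarrow> real) \<Rightarrow> (nat \<Rightarrow> real)
                   \<Rightarrow> (nat \<Rightarrow> real) \<Rightarrow> nat" where
  "Ustar N P al lam T =
    (if Acal P al lam 2 * bj N P al lam T (N 1 - N 2 - 1) 2
          < Acal P al lam 1 * bj N P al lam T (N 1 - N 2) 1 + Acal P al lam 2 * bj N P al lam T (N 1 - N 2) 2
     then N 1 - N 2 - 1 else N 1 - N 2)"

end

theory Submission
  imports Defs
begin

lemma powr_m2_int: "set_integrable lborel {1..} (\<lambda>x::real. x powr (-2))"
proof -
  have "(\<lambda>x::real. x powr (-2)) integrable_on {1..}"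
    using has_integral_powr_to_inf[of "-2" 1] by (auto simp: integrable_on_def)
  then have "(\<lambda>x::real. x powr (-2)) absolutely_integrable_on {1..}"
    by (rule nonnegative_absolutely_integrable_1) auto
  then show ?thesis
    unfolding set_integrable_def
    by (subst integrable_completion[symmetric]) auto
qed

lemma exp_ge_term: assumes "(y::real) \<ge> 0" shows "y ^ m / fact m \<le> exp y"
proof -
  have s: "summable (\<lambda>n. y ^ n / fact n)"
    using exp_converges[of y] by (simp add: sums_iff divide_inverse mult.commute)
  have "sum (\<lambda>n. y ^ n / fact n) {m} \<le> suminf (\<lambda>n. y ^ n / fact n)"
    by (rule sum_le_suminf[OF s]) (use assms in auto)
  also have "\<dots> = exp y"
    using exp_converges[of y] by (simp add: sums_iff divide_inverse mult.commute)
  finally show ?thesis by simp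
qed

lemma tail_bound:
  fixes c p t x :: real
  assumes c: "c > 0" and p: "p > 0" and t: "t \<ge> 0" and x: "x \<ge> 1"
  shows "x powr t * exp (- c * x powr p) \<le> (fact (nat \<lceil>(t+2)/p\<rceil>) / c ^ nat \<lceil>(t+2)/p\<rceil>) * x powr (-2)"
proof -
  define m where "m = nat \<lceil>(t+2)/p\<rceil>"
  have pm: "p * real m \<ge> t + 2"
  proof -
    have "real m \<ge> (t+2)/p" unfolding m_def by linarith
    then show ?thesis using p by (simp add: field_simps)
  qed
  define y where "y = c * x powr p"
  have y: "y > 0" using c x unfolding y_def by simp
  have e: "y ^ m / fact m \<le> exp y" using exp_ge_term y by simp
  have ym: "y ^ m = c ^ m * x powr (p * real m)"
    unfolding y_def using x by (simp add: power_mult_distrib powr_realpow[symmetric] powr_powr)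
  have "x powr t * exp (- c * x powr p) = x powr t / exp y" by (simp add: y_def exp_minus field_simps)
  also have "\<dots> \<le> x powr t / (y ^ m / fact m)"
    by (rule divide_left_mono[OF e]) (use y in auto)
  also have "\<dots> = (fact m / c ^ m) * (x powr t / x powr (p * real m))"
    using c x by (simp add: ym field_simps)
  also have "x powr t / x powr (p * real m) = x powr (t - p * real m)"
    using x by (simp add: powr_diff)
  also have "\<dots> \<le> x powr (-2)" using x pm by (intro powr_mono) auto
  finally show ?thesis
    unfolding m_def[symmetric] using c
    by (simp add: divide_right_mono mult_left_mono)
qed
lemma GI:
  fixes c p t :: real
  assumes c: "c > 0" and p: "p > 0" and t: "t \<ge> 0"
  shows "set_integrable lborel {0<..} (\<lambda>x. x powr t * exp (- c * x powr p))"
proof -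
  define K where "K = fact (nat \<lceil>(t+2)/p\<rceil>) / c ^ nat \<lceil>(t+2)/p\<rceil>"
  have K: "K \<ge> 0" unfolding K_def using c by simp
  have i1: "set_integrable lborel {0..1} (\<lambda>x::real. 1::real)"
    by (rule borel_integrable_atLeastAtMost') (rule continuous_on_const)
  have i2: "set_integrable lborel {1..} (\<lambda>x::real. K * x powr (-2))"
    using powr_m2_int unfolding set_integrable_def
    by (simp add: integrable_mult_right mult.left_commute)
  have int: "integrable lborel (\<lambda>x::real. indicator {0..1} x * 1 + indicator {1..} x * (K * x powr (-2)))"
    using i1 i2 unfolding set_integrable_def by (intro Bochner_Integration.integrable_add) auto
  show ?thesis
    unfolding set_integrable_def
  proof (rule Bochner_Integration.integrable_bound[OF int])
    show "(\<lambda>x. indicator {0<..} x *\<^sub>R (x powr t * exp (- c * x powr p))) \<in> borel_measurable lborel"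
      by measurable
    show "AE x in lborel. norm (indicator {0<..} x *\<^sub>R (x powr t * exp (- c * x powr p)))
          \<le> norm (indicator {0..1} x * 1 + indicator {1..} x * (K * x powr (-2)))"
    proof (rule AE_I2)
      fix x :: real
      consider "x \<le> 0" | "0 < x" "x < 1" | "x \<ge> 1" by linarith
      then show "norm (indicator {0<..} x *\<^sub>R (x powr t * exp (- c * x powr p)))
          \<le> norm (indicator {0..1} x * 1 + indicator {1..} x * (K * x powr (-2)))"
      proof cases
        case 1 then show ?thesis by simp
      next
        case 2
        have "x powr t \<le> 1" using 2 t by (simp add: powr_le1)
        moreover have "exp (- c * x powr p) \<le> 1" using c 2 by simp
        ultimately have "x powr t * exp (- c * x powr p) \<le> 1"
          by (simp add: mult_le_one)
        then show ?thesis using 2 by simp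
      next
        case 3
        have "x powr t * exp (- c * x powr p) \<le> K * x powr (-2)"
          unfolding K_def using tail_bound[OF c p t 3] .
        moreover have "0 \<le> K * x powr (-2)" using K by simp
        ultimately show ?thesis using 3 by (cases "x = 1") (auto simp: indicator_def)
      qed
    qed
  qed
qed
lemma PI:
  fixes f :: "real \<Rightarrow> real"
  assumes int: "set_integrable lborel A f" and pos: "\<And>x. x \<in> A \<Longrightarrow> f x > 0"
    and sub: "{a<..<b} \<subseteq> A" and ab: "a < b"
  shows "(LINT x:A|lborel. f x) > 0"
proof -
  let ?g = "\<lambda>x. indicator A x *\<^sub>R f x"
  have nn: "AE x in lborel. 0 \<le> ?g x" using pos by (auto simp: indicator_def less_imp_le)
  have ge: "0 \<le> integral\<^sup>L lborel ?g" by (rule integral_nonneg_AE[OF nn])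
  have "integral\<^sup>L lborel ?g \<noteq> 0"
  proof
    assume "integral\<^sup>L lborel ?g = 0"
    then have "AE x in lborel. ?g x = 0"
      using integral_nonneg_eq_0_iff_AE[OF int[unfolded set_integrable_def] nn] by simp
    then have "AE x in lborel. x \<notin> {a<..<b}"
      by eventually_elim (use sub pos in \<open>fastforce simp: indicator_def\<close>)
    then have "emeasure lborel {a<..<b} = 0"
      by (subst (asm) AE_iff_measurable[OF _ refl]) (auto simp: greaterThanLessThan_def greaterThan_def lessThan_def Collect_conj_eq[symmetric])
    then show False using ab by simp
  qed
  then show ?thesis using ge unfolding set_lebesgue_integral_def by simp
qed
lemma GIb:
  fixes g :: "real \<Rightarrow> real" and c p t C :: real
  assumes c: "c > 0" and p: "p > 0" and t: "t \<ge> 0"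
    and meas: "g \<in> borel_measurable lborel"
    and bd: "\<And>x. x > 0 \<Longrightarrow> \<bar>g x\<bar> \<le> C * (x powr t * exp (- c * x powr p))"
  shows "set_integrable lborel {0<..} g"
proof -
  have i: "integrable lborel (\<lambda>x. C * (indicator {0<..} x *\<^sub>R (x powr t * exp (- c * x powr p))))"
    using GI[OF c p t] unfolding set_integrable_def by (rule integrable_mult_right)
  show ?thesis unfolding set_integrable_def
    by (rule Bochner_Integration.integrable_bound[OF i])
       (use meas bd in \<open>auto simp: indicator_def intro!: AE_I2 intro: order_trans[OF _ abs_ge_self]\<close>)
qed

lemma Acal_int:
  assumes "lam j > 0" "lam (oth j) \<ge> 0" "P j > 0" "P (oth j) > 0" "al (oth j) > 0" "al j > 0"
  shows "set_integrable lborel {0<..} (\<lambda>z. z * exp (- pi * lam j * z\<^sup>2) *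
        exp (- pi * lam (oth j) * (P (oth j) / P j) powr (2 / al (oth j))
              * z powr (2 * al j / al (oth j))))"
proof (rule GIb[where c="pi * lam j" and p=2 and t=1 and C=1])
  show "0 < pi * lam j" using assms by simp
  show "(\<lambda>z. z * exp (- pi * lam j * z\<^sup>2) *
        exp (- pi * lam (oth j) * (P (oth j) / P j) powr (2 / al (oth j))
              * z powr (2 * al j / al (oth j)))) \<in> borel_measurable lborel" by measurable
  fix x :: real assume x: "x > 0"
  have e: "exp (- pi * lam (oth j) * (P (oth j) / P j) powr (2 / al (oth j))
              * x powr (2 * al j / al (oth j))) \<le> 1"
    using assms by (simp add: mult_nonneg_nonneg)
  have "\<bar>x * exp (- pi * lam j * x\<^sup>2) *
        exp (- pi * lam (oth j) * (P (oth j) / P j) powr (2 / al (oth j))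
              * x powr (2 * al j / al (oth j)))\<bar>
     = x * exp (- pi * lam j * x\<^sup>2) *
        exp (- pi * lam (oth j) * (P (oth j) / P j) powr (2 / al (oth j))
              * x powr (2 * al j / al (oth j)))" using x by simp
  also have "\<dots> \<le> x * exp (- pi * lam j * x\<^sup>2) * 1"
    by (rule mult_left_mono[OF e]) (use x in simp)
  also have "\<dots> = 1 * (x powr 1 * exp (- (pi * lam j) * x powr 2))"
    using x by (simp add: powr_realpow)
  finally show "\<bar>x * exp (- pi * lam j * x\<^sup>2) *
        exp (- pi * lam (oth j) * (P (oth j) / P j) powr (2 / al (oth j))
              * x powr (2 * al j / al (oth j)))\<bar> \<le> 1 * (x powr 1 * exp (- (pi * lam j) * x powr 2))" .
qed auto

lemma Acal_pos:
  assumes "lam j > 0" "lam (oth j) \<ge> 0" "P j > 0" "P (oth j) > 0" "al (oth j) > 0" "al j > 0"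
  shows "Acal P al lam j > 0"
proof -
  have "(LINT z:{0<..}|lborel. z * exp (- pi * lam j * z\<^sup>2) *
        exp (- pi * lam (oth j) * (P (oth j) / P j) powr (2 / al (oth j))
              * z powr (2 * al j / al (oth j)))) > 0"
    by (rule PI[OF Acal_int[OF assms], of 0 1]) auto
  then show ?thesis unfolding Acal_def using assms by simp
qed
locale hyp =
  fixes P al lam :: "nat \<Rightarrow> real" and j :: nat
  assumes lj: "lam j > 0" and lo: "lam (oth j) > 0" and Pj: "P j > 0" and Po: "P (oth j) > 0"
    and ao: "al (oth j) > 0" and aj: "al j > 0" and P1: "P 1 > 0" and a1: "al 1 > 0"
begin

lemma A_pos: "Acal P al lam j > 0"
  using Acal_pos[of lam j P al] lj lo Pj Po ao aj by simp

lemma fY_pos: "y > 0 \<Longrightarrow> fY P al lam j y > 0"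
  unfolding fY_def using A_pos lj by simp

lemma fY_nonneg: "y \<ge> 0 \<Longrightarrow> fY P al lam j y \<ge> 0"
  unfolding fY_def using A_pos lj by simp

lemma fY_meas: "fY P al lam j \<in> borel_measurable lborel"
  unfolding fY_def by measurable

lemma fY_cont: "y > 0 \<Longrightarrow> isCont (fY P al lam j) y"
  unfolding fY_def by (intro continuous_intros) auto

lemma fY_bound: "y > 0 \<Longrightarrow> fY P al lam j y \<le> 2 * pi * lam j / Acal P al lam j * y * exp (- (pi * lam j) * y\<^sup>2)"
  unfolding fY_def using A_pos lj lo Pj Po
  by (intro mult_left_mono) (auto simp: algebra_simps mult_nonneg_nonneg)

lemma moment_int:
  assumes s: "s \<ge> 0"
  shows "set_integrable lborel {0<..} (\<lambda>y. y powr s * fY P al lam j y)"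
proof (rule GIb[where c="pi * lam j" and p=2 and t="s+1" and C="2 * pi * lam j / Acal P al lam j"])
  show "0 < pi * lam j" using lj by simp
  show "(\<lambda>y. y powr s * fY P al lam j y) \<in> borel_measurable lborel"
    using fY_meas by measurable
  fix x :: real assume x: "x > 0"
  have "\<bar>x powr s * fY P al lam j x\<bar> = x powr s * fY P al lam j x"
    using x fY_pos[OF x] by simp
  also have "\<dots> \<le> x powr s * (2 * pi * lam j / Acal P al lam j * x * exp (- (pi * lam j) * x\<^sup>2))"
    by (rule mult_left_mono[OF fY_bound[OF x]]) simp
  also have "\<dots> = 2 * pi * lam j / Acal P al lam j * (x powr (s + 1) * exp (- (pi * lam j) * x powr 2))"
    using x by (simp add: powr_add powr_realpow)
  finally show "\<bar>x powr s * fY P al lam j x\<bar> \<le> 2 * pi * lam j / Acal P al lam j * (x powr (s + 1) * exp (- (pi * lam j) * x powr 2))" .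
qed (use s in auto)

lemma moment_pos:
  assumes s: "s \<ge> 0"
  shows "(LINT y:{0<..}|lborel. y powr s * fY P al lam j y) > 0"
  by (rule PI[OF moment_int[OF s], of 0 1]) (auto intro!: mult_pos_pos fY_pos)

lemma moment_nonneg:
  "(LINT y:{0<..}|lborel. y powr s * fY P al lam j y) \<ge> 0"
  unfolding set_lebesgue_integral_def
  by (rule integral_nonneg_AE) (auto intro!: AE_I2 mult_nonneg_nonneg fY_nonneg simp: indicator_def)

lemma G_int: "0 < A \<Longrightarrow> set_integrable lborel {A..B} (fY P al lam j)"
  by (rule borel_integrable_atLeastAtMost') (auto intro!: continuous_at_imp_continuous_on fY_cont)

lemma G_nonneg: "0 \<le> A \<Longrightarrow> (LINT y:{A..B}|lborel. fY P al lam j y) \<ge> 0"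
  unfolding set_lebesgue_integral_def
  by (rule integral_nonneg_AE) (auto intro!: AE_I2 fY_nonneg simp: indicator_def)

lemma G_pos: "0 < A \<Longrightarrow> A < B \<Longrightarrow> (LINT y:{A..B}|lborel. fY P al lam j y) > 0"
  by (rule PI[OF G_int, of A B A B]) (auto intro!: fY_pos)

lemma G_bound:
  assumes A: "0 < A" and AB: "A \<le> B"
  shows "(LINT y:{A..B}|lborel. fY P al lam j y) \<le> B * (2 * pi * lam j / Acal P al lam j * B * exp (- (pi * lam j) * A\<^sup>2))"
proof -
  let ?K = "2 * pi * lam j / Acal P al lam j"
  have "(LINT y:{A..B}|lborel. fY P al lam j y) \<le> (LINT y:{A..B}|lborel. ?K * B * exp (- (pi * lam j) * A\<^sup>2))"
  proof (rule set_integral_mono[OF G_int[OF A]])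
    show "set_integrable lborel {A..B} (\<lambda>y. ?K * B * exp (- (pi * lam j) * A\<^sup>2))"
      by (rule borel_integrable_atLeastAtMost') (rule continuous_on_const)
    fix y assume y: "y \<in> {A..B}"
    then have y0: "y > 0" using A by auto
    have "fY P al lam j y \<le> ?K * y * exp (- (pi * lam j) * y\<^sup>2)" by (rule fY_bound[OF y0])
    also have "\<dots> \<le> ?K * B * exp (- (pi * lam j) * A\<^sup>2)"
    proof (rule mult_mono)
      show "?K * y \<le> ?K * B" using y A_pos lj by (intro mult_left_mono) auto
      have "A\<^sup>2 \<le> y\<^sup>2" using y A by (intro power_mono) auto
      then show "exp (- (pi * lam j) * y\<^sup>2) \<le> exp (- (pi * lam j) * A\<^sup>2)" using lj by simp
    qed (use A_pos lj A y in auto)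
    finally show "fY P al lam j y \<le> ?K * B * exp (- (pi * lam j) * A\<^sup>2)" .
  qed
  also have "\<dots> = (B - A) * (?K * B * exp (- (pi * lam j) * A\<^sup>2))"
    using AB by (simp add: set_integral_const)
  also have "\<dots> \<le> B * (?K * B * exp (- (pi * lam j) * A\<^sup>2))"
    using A AB A_pos lj by (intro mult_right_mono) auto
  finally show ?thesis .
qed

lemma Lbarj_nonneg: "Lbarj P al lam j Tj \<ge> 0"
proof -
  have "0 \<le> (LINT r:{0<..}|lborel. r *
        (LINT y:{(P j / (P 1 * Tj)) powr (1 / al j) * r powr (al 1 / al j) ..
               (P j / P 1) powr (1 / al j) * r powr (al 1 / al j)}|lborel. fY P al lam j y))"
    unfolding set_lebesgue_integral_def[of lborel "{0<..}"]
    by (rule integral_nonneg_AE, rule AE_I2)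
       (auto simp: indicator_def intro!: mult_nonneg_nonneg G_nonneg)
  then show ?thesis unfolding Lbarj_def using lj by simp
qed

lemma Lbarj_pos:
  assumes T: "Tj > 1"
  shows "Lbarj P al lam j Tj > 0"
proof -
  define a where "a = (P j / (P 1 * Tj)) powr (1 / al j)"
  define b where "b = (P j / P 1) powr (1 / al j)"
  define g where "g = al 1 / al j"
  define K where "K = 2 * pi * lam j / Acal P al lam j"
  have a0: "a > 0" unfolding a_def using Pj P1 T by simp
  have ab: "a < b" unfolding a_def b_def using Pj P1 T aj
    by (intro powr_less_mono2) (auto simp: field_simps)
  have g0: "g > 0" unfolding g_def using a1 aj by simp
  have K0: "K > 0" unfolding K_def using lj A_pos by simp
  let ?h = "\<lambda>r. r * (LINT y:{a * r powr g .. b * r powr g}|lborel. fY P al lam j y)"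
  have meas: "?h \<in> borel_measurable lborel"
  proof -
    have [measurable]: "fY P al lam j \<in> borel_measurable borel" unfolding fY_def by measurable
    show ?thesis unfolding set_lebesgue_integral_def atLeastAtMost_iff indicator_def by measurable
  qed
  have int: "set_integrable lborel {0<..} ?h"
  proof (rule GIb[where c="pi * lam j * a\<^sup>2" and p="2*g" and t="1 + 2*g" and C="K * b\<^sup>2"])
    fix r :: real assume r: "r > 0"
    define A where "A = a * r powr g"
    define B where "B = b * r powr g"
    have A0: "A > 0" unfolding A_def using a0 r by simp
    have AB: "A \<le> B" unfolding A_def B_def using ab r by simp
    have G0: "(LINT y:{A..B}|lborel. fY P al lam j y) \<ge> 0" using G_nonneg A0 by simp
    have "\<bar>?h r\<bar> = r * (LINT y:{A..B}|lborel. fY P al lam j y)"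
      using r G0 unfolding A_def B_def by simp
    also have "\<dots> \<le> r * (B * (K * B * exp (- (pi * lam j) * A\<^sup>2)))"
      using G_bound[OF A0 AB] r unfolding K_def by (intro mult_left_mono) auto
    also have "\<dots> = K * b\<^sup>2 * (r powr (1 + 2 * g) * exp (- (pi * lam j * a\<^sup>2) * r powr (2 * g)))"
      unfolding A_def B_def using r
      by (simp add: powr_add power2_eq_square powr_mult_base field_simps
            flip: powr_add)
    finally show "\<bar>?h r\<bar> \<le> K * b\<^sup>2 * (r powr (1 + 2 * g) * exp (- (pi * lam j * a\<^sup>2) * r powr (2 * g)))" .
  qed (use lj a0 g0 meas in auto)
  have "(LINT r:{0<..}|lborel. ?h r) > 0"
  proof (rule PI[OF int, of 0 1])
    fix r :: real assume "r \<in> {0<..}"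
    then have r: "r > 0" by simp
    have "a * r powr g < b * r powr g" using ab r by simp
    then show "?h r > 0" using r a0 by (intro mult_pos_pos G_pos) auto
  qed auto
  then show ?thesis unfolding Lbarj_def a_def[symmetric] b_def[symmetric] g_def[symmetric]
    using lj by simp
qed

end


lemma sum_exp: "summable (\<lambda>k. (L::real) ^ k / fact k)"
  using exp_converges[of L] by (simp add: sums_iff divide_inverse mult.commute)

lemma suminf_exp: "(\<Sum>k. (L::real) ^ k / fact k) = exp L"
  using exp_converges[of L] by (simp add: sums_iff divide_inverse mult.commute)

definition hU :: "real \<Rightarrow> nat \<Rightarrow> nat \<Rightarrow> real" where
  "hU L U k = (if k < U then L ^ k / fact k else real U * (L ^ k / fact (k + 1)))"

lemma hU_le: assumes "L \<ge> 0" shows "hU L U k \<le> L ^ k / fact k"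
proof (cases "k < U")
  case False
  have "real U * (L ^ k / fact (k + 1)) \<le> real (k+1) * (L ^ k / fact (k + 1))"
    using False assms by (intro mult_right_mono) auto
  also have "\<dots> = L ^ k / fact k"
  proof -
    have f: "fact (k+1) = real (k + 1) * (fact k :: real)" by (simp del: of_nat_Suc)
    have "real (k+1) \<noteq> 0" by simp
    then show ?thesis unfolding f by (simp del: of_nat_Suc)
  qed
  finally show ?thesis using False by (simp add: hU_def)
qed (simp add: hU_def)

lemma hU_nonneg: "L \<ge> 0 \<Longrightarrow> hU L U k \<ge> 0" by (simp add: hU_def)

lemma hU_summable: "L \<ge> 0 \<Longrightarrow> summable (hU L U)"
  by (rule summable_comparison_test'[OF sum_exp[of L], where N=0]) (auto simp: hU_nonneg hU_le)

lemma hU_mono: assumes "L \<ge> 0" "U \<le> U'" shows "hU L U k \<le> hU L U' k"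
proof -
  consider "k < U" | "U \<le> k" "k < U'" | "U' \<le> k" by linarith
  then show ?thesis
  proof cases
    case 2
    then have "hU L U k \<le> L ^ k / fact k" using hU_le[OF assms(1)] by blast
    then show ?thesis using 2 by (simp add: hU_def)
  next
    case 3 then show ?thesis using assms by (auto simp: hU_def intro!: mult_right_mono divide_right_mono)
  qed (use assms in \<open>auto simp: hU_def\<close>)
qed

lemma pc_eq:
  assumes L: "Lbar P al lam T \<ge> 0"
  shows "pc P al lam T U = exp (- Lbar P al lam T) * suminf (hU (Lbar P al lam T) U)"
proof -
  define L where "L = Lbar P al lam T"
  have L0: "L \<ge> 0" using L L_def by simp
  define f1 where "f1 = (\<lambda>k. if k < U then L ^ k / fact k else 0)"
  define f2 where "f2 = (\<lambda>k. if U \<le> k then L ^ k / fact (k + 1) else (0::real))"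
  have s1: "summable f1" unfolding f1_def
    by (rule summable_finite[of "{..<U}"]) auto
  have e1: "suminf f1 = (\<Sum>k<U. L ^ k / fact k)" unfolding f1_def
    by (subst suminf_finite[of "{..<U}"]) auto
  have s2: "summable f2"
    by (rule summable_comparison_test'[OF sum_exp[of L], where N=0])
       (use L0 in \<open>auto simp: f2_def intro!: divide_left_mono fact_mono\<close>)
  have "suminf (hU L U) = suminf (\<lambda>k. f1 k + real U * f2 k)"
    by (rule arg_cong[where f=suminf]) (auto simp: hU_def f1_def f2_def fun_eq_iff)
  also have "\<dots> = suminf f1 + suminf (\<lambda>k. real U * f2 k)"
    by (rule suminf_add[symmetric]) (use s1 s2 in auto)
  also have "\<dots> = (\<Sum>k<U. L ^ k / fact k) + real U * suminf f2"
    using e1 suminf_mult[OF s2] by simp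
  finally show ?thesis
    unfolding pc_def Let_def L_def[symmetric] f2_def by simp
qed

lemma pc_le1: "Lbar P al lam T \<ge> 0 \<Longrightarrow> pc P al lam T U \<le> 1"
proof -
  assume L: "Lbar P al lam T \<ge> 0"
  define L where "L = Lbar P al lam T"
  have L0: "L \<ge> 0" using L L_def by simp
  have "suminf (hU L U) \<le> (\<Sum>k. L ^ k / fact k)"
    by (rule suminf_le[OF _ hU_summable[OF L0] sum_exp]) (rule hU_le[OF L0])
  then have "exp (- L) * suminf (hU L U) \<le> exp (- L) * exp L"
    by (simp add: suminf_exp)
  then show ?thesis using pc_eq[OF L] L_def by (simp add: exp_minus)
qed

lemma pc_mono: "Lbar P al lam T \<ge> 0 \<Longrightarrow> U \<le> U' \<Longrightarrow> pc P al lam T U \<le> pc P al lam T U'"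
proof -
  assume L: "Lbar P al lam T \<ge> 0" and U: "U \<le> U'"
  define L where "L = Lbar P al lam T"
  have L0: "L \<ge> 0" using L L_def by simp
  have "suminf (hU L U) \<le> suminf (hU L U')"
    by (rule suminf_le[OF _ hU_summable[OF L0] hU_summable[OF L0]]) (rule hU_mono[OF L0 U])
  then show ?thesis using pc_eq[OF L, of U] pc_eq[OF L, of U'] L_def
    by (simp add: mult_left_mono)
qed

lemma Q1_pos: assumes "Lbar P al lam T > 0" shows "Q1 P al lam T U > 0"
proof -
  define L where "L = Lbar P al lam T"
  have L0: "L > 0" using assms L_def by simp
  let ?f = "\<lambda>k. if min U k = U then poisson L k else 0"
  have s: "summable ?f"
    by (rule summable_comparison_test'[OF summable_mult[OF sum_exp[of L], of "exp (-L)"], where N=0])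
       (use L0 in \<open>auto simp: poisson_def\<close>)
  have "0 < suminf ?f"
    by (rule suminf_pos2[OF s, of U]) (use L0 in \<open>auto simp: poisson_def\<close>)
  then show ?thesis unfolding Q1_def L_def .
qed


lemma finite_triples: "finite (triples n)"
  by (rule finite_subset[of _ "{0..n} \<times> {0..n} \<times> {0..n}"]) (auto simp: triples_def)

lemma finite_parts: "finite (parts n)"
proof (rule finite_subset)
  show "parts n \<subseteq> {m. \<forall>a. (a \<in> {1..n} \<longrightarrow> m a \<in> {0..n}) \<and> (a \<notin> {1..n} \<longrightarrow> m a = 0)}"
  proof safe
    fix m a assume m: "m \<in> parts n" and a: "a \<in> {1..n}"
    have "a * m a \<le> (\<Sum>a=1..n. a * m a)"
      by (rule member_le_sum) (use a in auto)
    also have "\<dots> = n" using m by (simp add: parts_def)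
    finally have "a * m a \<le> n" .
    moreover have "1 * m a \<le> a * m a" by (rule mult_le_mono1) (use a in auto)
    ultimately have "1 * m a \<le> n" by (rule le_trans[rotated])
    then show "m a \<in> {0..n}" by simp
  next
    fix m a assume m: "m \<in> parts n" and a: "a \<notin> {1..n}"
    then show "m a = 0" by (auto simp: parts_def)
  qed
  show "finite {m. \<forall>a. (a \<in> {1..n} \<longrightarrow> m a \<in> {0..n}) \<and> (a \<notin> {1..n} \<longrightarrow> m a = 0)}"
    by (rule finite_set_of_finite_funs) auto
qed

definition Ssum :: "nat \<Rightarrow> (nat\<Rightarrow>real) \<Rightarrow> (nat\<Rightarrow>real) \<Rightarrow> (nat\<Rightarrow>real) \<Rightarrow> (nat \<Rightarrow> nat \<Rightarrow> real) \<Rightarrow> real" where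
  "Ssum n c1 c2 c3 I = (\<Sum>(n1, n2, n3)\<in>triples n.
       \<Sum>m\<in>parts n1. \<Sum>p\<in>parts n2. \<Sum>q\<in>parts n3.
         I ((\<Sum>a=1..n1. m a) + (\<Sum>a=1..n2. p a)) (\<Sum>a=1..n3. q a)
         * (\<Prod>a=1..n1. (1 / fact (m a)) * c1 a ^ m a)
         * (\<Prod>a=1..n2. (1 / fact (p a)) * c2 a ^ p a)
         * (\<Prod>a=1..n3. (1 / fact (q a)) * c3 a ^ q a))"

lemma prod_nonneg': "(\<And>a. a \<ge> 1 \<Longrightarrow> c a \<ge> 0) \<Longrightarrow> 0 \<le> (\<Prod>a=1..n. (1 / fact (m a)) * (c a :: real) ^ m a)"
  by (intro prod_nonneg) auto

lemma prod_pos': "(\<And>a. a \<ge> 1 \<Longrightarrow> c a > 0) \<Longrightarrow> 0 < (\<Prod>a=1..n. (1 / fact (m a)) * (c a :: real) ^ m a)"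
  by (intro prod_pos) auto

lemma prod_mono': "(\<And>a. a \<ge> 1 \<Longrightarrow> c a \<ge> 0) \<Longrightarrow> (\<And>a. a \<ge> 1 \<Longrightarrow> c a \<le> d a) \<Longrightarrow>
   (\<Prod>a=1..n. (1 / fact (m a)) * (c a :: real) ^ m a) \<le> (\<Prod>a=1..n. (1 / fact (m a)) * (d a :: real) ^ m a)"
  by (intro prod_mono conjI mult_nonneg_nonneg mult_left_mono power_mono) auto

lemma prod_nonneg'': "(\<And>a. a \<ge> 1 \<Longrightarrow> c a \<ge> 0) \<Longrightarrow> 0 \<le> (\<Prod>a=Suc 0..n. (c a :: real) ^ m a / fact (m a))"
  by (intro prod_nonneg) auto

lemma prod_mono'': "(\<And>a. a \<ge> 1 \<Longrightarrow> c a \<ge> 0) \<Longrightarrow> (\<And>a. a \<ge> 1 \<Longrightarrow> c a \<le> d a) \<Longrightarrow>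
   (\<Prod>a=Suc 0..n. (c a :: real) ^ m a / fact (m a)) \<le> (\<Prod>a=Suc 0..n. (d a :: real) ^ m a / fact (m a))"
  by (intro prod_mono conjI divide_nonneg_nonneg divide_right_mono power_mono) auto

lemma prod_pos'': "(\<And>a. a \<ge> 1 \<Longrightarrow> c a > 0) \<Longrightarrow> 0 < (\<Prod>a=Suc 0..n. (c a :: real) ^ m a / fact (m a))"
  by (intro prod_pos) auto

lemma Ssum_nonneg:
  assumes "\<And>k l. I k l \<ge> 0" "\<And>a. a \<ge> 1 \<Longrightarrow> c1 a \<ge> 0" "\<And>a. a \<ge> 1 \<Longrightarrow> c2 a \<ge> 0" "\<And>a. a \<ge> 1 \<Longrightarrow> c3 a \<ge> 0"
  shows "Ssum n c1 c2 c3 I \<ge> 0"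
  unfolding Ssum_def
  by (auto simp: assms split: prod.splits intro!: sum_nonneg mult_nonneg_nonneg prod_nonneg' prod_nonneg'')

lemma helper4: "0 \<le> (a::real) \<Longrightarrow> x \<le> y \<Longrightarrow> 0 \<le> b \<Longrightarrow> 0 \<le> c \<Longrightarrow> a * x * b * c \<le> a * y * b * c"
  by (intro mult_right_mono mult_left_mono) auto

lemma Ssum_mono:
  assumes "\<And>k l. I k l \<ge> 0" "\<And>a. a \<ge> 1 \<Longrightarrow> c1 a \<ge> 0" "\<And>a. a \<ge> 1 \<Longrightarrow> c1 a \<le> d1 a"
    "\<And>a. a \<ge> 1 \<Longrightarrow> c2 a \<ge> 0" "\<And>a. a \<ge> 1 \<Longrightarrow> c3 a \<ge> 0"
  shows "Ssum n c1 c2 c3 I \<le> Ssum n d1 c2 c3 I"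
  unfolding Ssum_def
  by (auto simp: assms split: prod.splits intro!: sum_mono helper4 prod_mono' prod_nonneg' prod_mono'' prod_nonneg'')

lemma Ssum_pos:
  assumes "\<And>k l. I k l > 0" "\<And>a. a \<ge> 1 \<Longrightarrow> c1 a \<ge> 0" "\<And>a. a \<ge> 1 \<Longrightarrow> c2 a \<ge> 0" "\<And>a. a \<ge> 1 \<Longrightarrow> c3 a > 0"
  shows "Ssum n c1 c2 c3 I > 0"
proof -
  have c3: "\<And>a. a \<ge> 1 \<Longrightarrow> c3 a \<ge> 0" using assms(4) less_imp_le by blast
  have I: "\<And>k l. I k l \<ge> 0" using assms(1) less_imp_le by blast
  define z where "z = (\<lambda>a::nat. 0::nat)"
  define q where "q = (\<lambda>a::nat. if a = 1 then n else 0)"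
  have z: "z \<in> parts 0" by (simp add: parts_def z_def)
  have q: "q \<in> parts n"
  proof -
    have "(\<Sum>a=1..n. a * q a) = n"
    proof (cases n)
      case (Suc k)
      then have "(\<Sum>a=1..n. a * q a) = (\<Sum>a\<in>{1}. a * q a)"
        by (intro sum.mono_neutral_right) (auto simp: q_def)
      then show ?thesis by (simp add: q_def)
    qed simp
    then show ?thesis unfolding parts_def q_def by auto
  qed
  have t: "(0, 0, n) \<in> triples n" by (simp add: triples_def)
  show ?thesis unfolding Ssum_def
  proof (rule sum_pos2[OF finite_triples t])
    show "\<And>i. i \<in> triples n \<Longrightarrow> 0 \<le> (case i of (n1, n2, n3) \<Rightarrow> \<Sum>m\<in>parts n1. \<Sum>p\<in>parts n2. \<Sum>q\<in>parts n3.
         I ((\<Sum>a=1..n1. m a) + (\<Sum>a=1..n2. p a)) (\<Sum>a=1..n3. q a)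
         * (\<Prod>a=1..n1. (1 / fact (m a)) * c1 a ^ m a)
         * (\<Prod>a=1..n2. (1 / fact (p a)) * c2 a ^ p a)
         * (\<Prod>a=1..n3. (1 / fact (q a)) * c3 a ^ q a))"
      by (auto simp: assms I c3 split: prod.splits intro!: sum_nonneg mult_nonneg_nonneg prod_nonneg' prod_nonneg'')
    have p0: "parts 0 = {z}" unfolding parts_def z_def by auto
    have "0 < (\<Sum>q\<in>parts n.
         I 0 (\<Sum>a=1..n. q a) * (\<Prod>a=1..n. (1 / fact (q a)) * c3 a ^ q a))"
      by (intro sum_pos2[OF finite_parts q])
         (auto simp: assms I c3 intro!: mult_pos_pos prod_pos'' mult_nonneg_nonneg prod_nonneg'' prod_pos)
    then have "0 < (\<Sum>m\<in>parts 0. \<Sum>p\<in>parts 0. \<Sum>q\<in>parts n.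
         I ((\<Sum>a=1..0. m a) + (\<Sum>a=1..0. p a)) (\<Sum>a=1..n. q a)
         * (\<Prod>a=1..0. (1 / fact (m a)) * c1 a ^ m a)
         * (\<Prod>a=1..0. (1 / fact (p a)) * c2 a ^ p a)
         * (\<Prod>a=1..n. (1 / fact (q a)) * c3 a ^ q a))"
      by (simp add: p0)
    then show "0 < (case (0, 0, n) of (n1, n2, n3) \<Rightarrow> \<Sum>m\<in>parts n1. \<Sum>p\<in>parts n2. \<Sum>q\<in>parts n3.
         I ((\<Sum>a=1..n1. m a) + (\<Sum>a=1..n2. p a)) (\<Sum>a=1..n3. q a)
         * (\<Prod>a=1..n1. (1 / fact (m a)) * c1 a ^ m a)
         * (\<Prod>a=1..n2. (1 / fact (p a)) * c2 a ^ p a)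
         * (\<Prod>a=1..n3. (1 / fact (q a)) * c3 a ^ q a))" by simp
  qed
qed


definition C1 where "C1 P al lam T j pb = (\<lambda>a::nat. 2 * pi * lam 1 / (al 1 * (real a - 2 / al 1)) * (P 1 / P j) powr (2 / al 1)
                  * pb * (1 - T j powr (- (real a - 2 / al 1))))"
definition C2 where "C2 P al lam T j = (\<lambda>a::nat. 2 * pi * lam 1 / (al 1 * (real a - 2 / al 1)) * (P 1 / P j) powr (2 / al 1)
                  * T j powr (- (real a - 2 / al 1)))"
definition C3 where "C3 P al lam j = (\<lambda>a::nat. 2 * pi * lam 2 / (al 2 * (real a - 2 / al 2)) * (P 2 / P j) powr (2 / al 2))"
definition Imom where "Imom P al lam j = (\<lambda>k l. (\<integral>y\<in>{0<..}. y powr (2 * al j / al 1 * real k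
                                      + 2 * al j / al 2 * real l)
                               * fY P al lam j y \<partial>lborel))"

lemma bj_eq: "bj N P al lam T U j = (if j = 1 then Q1 P al lam T U else 1) *
   Ssum (N j - (if j = 1 then U else 0)) (C1 P al lam T j (1 - pc P al lam T U)) (C2 P al lam T j) (C3 P al lam j) (Imom P al lam j)"
  unfolding bj_def Ssum_def Let_def C1_def C2_def C3_def Imom_def ..

lemma ra_pos: assumes "(1::nat) \<le> a" "2 < (x::real)" shows "real a - 2 / x > 0"
proof -
  have "2 / x < 1" using assms by simp
  moreover have "real a \<ge> 1" using assms by simp
  ultimately show ?thesis by linarith
qed

theorem lemma4:
  fixes N :: "nat \<Rightarrow> nat" and P al lam T :: "nat \<Rightarrow> real"
  assumes "N 1 > N 2" and "N 2 \<ge> 1"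
    and "P 1 > 0" and "P 2 > 0"
    and "al 1 > 2" and "al 2 > 2"
    and "lam 1 > 0" and "lam 2 > 0"
    and "T 1 \<ge> 1" and "T 2 \<ge> 1"
    and "max (T 1) (T 2) > 1"
  shows "\<exists>\<beta>bar > 0. \<forall>\<beta>. 0 < \<beta> \<and> \<beta> < \<beta>bar \<longrightarrow>
           Ustar N P al lam T < N 1 \<and>
           (\<forall>U < N 1. Fout N P al lam T (Ustar N P al lam T) \<beta> \<le> Fout N P al lam T U \<beta>)"
proof -
  note asm = assms
  have o1: "oth 1 = 2" and o2: "oth 2 = 1" by (simp_all add: oth_def)
  interpret h1: hyp P al lam 1 using asm by unfold_locales (auto simp: oth_def)
  interpret h2: hyp P al lam 2 using asm by unfold_locales (auto simp: oth_def)
  define L where "L = Lbar P al lam T"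
  have L0: "L \<ge> 0" unfolding L_def Lbar_def using h1.Lbarj_nonneg h2.Lbarj_nonneg by (simp add: add_nonneg_nonneg)
  have Lpos: "L > 0"
  proof (cases "T 1 > 1")
    case True then show ?thesis unfolding L_def Lbar_def
      using h1.Lbarj_pos[OF True] h2.Lbarj_nonneg[of "T 2"] by simp
  next
    case False then have "T 2 > 1" using asm(11) by simp
    then show ?thesis unfolding L_def Lbar_def
      using h2.Lbarj_pos h1.Lbarj_nonneg[of "T 1"] by (simp add: add_nonneg_pos)
  qed
  define pb where "pb = (\<lambda>U. 1 - pc P al lam T U)"
  have pb0: "\<And>U. pb U \<ge> 0" unfolding pb_def using pc_le1[of P al lam T] L0 L_def by simp
  have pbmono: "\<And>U U'. U \<le> U' \<Longrightarrow> pb U' \<le> pb U" unfolding pb_def using pc_mono[of P al lam T] L0 L_def by simp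
  have al1: "al 1 > 0" "al 2 > 0" using asm by auto
  have C1nn: "\<And>j p a. j \<in> {1,2} \<Longrightarrow> p \<ge> 0 \<Longrightarrow> a \<ge> 1 \<Longrightarrow> C1 P al lam T j p a \<ge> 0"
  proof -
    fix j :: nat and p :: real and a :: nat assume j: "j \<in> {1,2}" and p: "p \<ge> 0" and a: "a \<ge> 1"
    have ra: "real a - 2 / al 1 > 0" using ra_pos a asm(5) by blast
    have Tj: "T j \<ge> 1" using j asm by auto
    have "T j powr (- (real a - 2 / al 1)) \<le> 1" using powr_mono[of "-(real a - 2 / al 1)" 0 "T j"] Tj ra by simp
    then show "C1 P al lam T j p a \<ge> 0" unfolding C1_def using ra asm p
      by (intro mult_nonneg_nonneg) auto
  qed
  have C1mono: "\<And>j p p' a. j \<in> {1,2} \<Longrightarrow> p \<le> p' \<Longrightarrow> a \<ge> 1 \<Longrightarrow> C1 P al lam T j p a \<le> C1 P al lam T j p' a"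
  proof -
    fix j :: nat and p p' :: real and a :: nat assume j: "j \<in> {1,2}" and p: "p \<le> p'" and a: "a \<ge> 1"
    have ra: "real a - 2 / al 1 > 0" using ra_pos a asm(5) by blast
    have Tj: "T j \<ge> 1" using j asm by auto
    have "T j powr (- (real a - 2 / al 1)) \<le> 1" using powr_mono[of "-(real a - 2 / al 1)" 0 "T j"] Tj ra by simp
    then show "C1 P al lam T j p a \<le> C1 P al lam T j p' a" unfolding C1_def using ra asm p
      by (intro mult_right_mono mult_left_mono) auto
  qed
  have C2nn: "\<And>j a. a \<ge> 1 \<Longrightarrow> C2 P al lam T j a \<ge> 0"
  proof -
    fix j :: nat and a :: nat assume a: "a \<ge> 1"
    have ra: "real a - 2 / al 1 > 0" using ra_pos a asm(5) by blast
    then show "C2 P al lam T j a \<ge> 0" unfolding C2_def using asm by simp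
  qed
  have C3pos: "\<And>j a. j \<in> {1,2} \<Longrightarrow> a \<ge> 1 \<Longrightarrow> C3 P al lam j a > 0"
  proof -
    fix j :: nat and a :: nat assume j: "j \<in> {1,2}" and a: "a \<ge> 1"
    have ra: "real a - 2 / al 2 > 0" using ra_pos a asm(6) by blast
    have "P j > 0" using j asm by auto
    then show "C3 P al lam j a > 0" unfolding C3_def using asm ra by simp
  qed
  have Ipos1: "\<And>k l. Imom P al lam 1 k l > 0"
    unfolding Imom_def using al1 by (intro h1.moment_pos) (simp add: add_nonneg_nonneg)
  have Ipos2: "\<And>k l. Imom P al lam 2 k l > 0"
    unfolding Imom_def using al1 by (intro h2.moment_pos) (simp add: add_nonneg_nonneg)
  define b2 where "b2 = (\<lambda>U. Acal P al lam 2 * bj N P al lam T U 2)"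
  define b1 where "b1 = (\<lambda>U. Acal P al lam 1 * bj N P al lam T U 1)"
  have b2nn: "\<And>U. b2 U \<ge> 0"
    unfolding b2_def bj_eq using h2.A_pos
    by (auto intro!: mult_nonneg_nonneg Ssum_nonneg C1nn C2nn less_imp_le[OF C3pos] less_imp_le[OF Ipos2] pb0[unfolded pb_def])
  have b2mono: "\<And>U U'. U \<le> U' \<Longrightarrow> b2 U' \<le> b2 U"
    unfolding b2_def bj_eq using h2.A_pos
    by (auto intro!: mult_left_mono Ssum_mono C1nn C1mono C2nn less_imp_le[OF C3pos] less_imp_le[OF Ipos2]
          pb0[unfolded pb_def] pbmono[unfolded pb_def])
  have b1pos: "\<And>U. b1 U > 0"
    unfolding b1_def bj_eq using h1.A_pos Q1_pos[of P al lam T] Lpos L_def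
    by (auto intro!: mult_pos_pos Ssum_pos C1nn C2nn C3pos Ipos1 Ipos1[unfolded One_nat_def] pb0[unfolded pb_def])
  define k where "k = N 1 - N 2"
  define B where "B = bfun N P al lam T"
  define Us where "Us = Ustar N P al lam T"
  have k1: "k \<ge> 1" using asm unfolding k_def by simp
  have Bk: "\<And>U. U < k \<Longrightarrow> B U = b2 U" "B k = b1 k + b2 k" "\<And>U. U > k \<Longrightarrow> B U = b1 U"
    unfolding B_def bfun_def b1_def b2_def k_def by auto
  have Us: "Us = (if b2 (k - 1) < b1 k + b2 k then k - 1 else k)"
    unfolding Us_def Ustar_def b1_def b2_def k_def by simp
  have Usk: "Us \<le> k" using Us by simp
  have BUs: "B Us = min (b2 (k-1)) (b1 k + b2 k)"
    using Us Bk k1 by (auto simp: min_def)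
  have BUs0: "B Us \<ge> 0" using BUs b2nn b1pos by (simp add: add_pos_nonneg less_imp_le)
  have low: "\<And>U. U \<le> k \<Longrightarrow> B Us \<le> B U"
  proof -
    fix U assume U: "U \<le> k"
    show "B Us \<le> B U"
    proof (cases "U = k")
      case True then show ?thesis using BUs Bk by simp
    next
      case False
      then have "B U = b2 U" "U \<le> k - 1" using Bk U by auto
      then show ?thesis using BUs b2mono[of U "k-1"] by simp
    qed
  qed
  have N1: "N 1 - U = N 2 + (k - U)" if "U \<le> k" for U using that asm unfolding k_def by simp
  define S where "S = (\<lambda>U. B U / (B Us + 1)) ` {k<..<N 1}"
  define bb where "bb = Min (insert 1 S)"
  have finS: "finite (insert 1 S)" unfolding S_def by simp
  have Spos: "\<And>x. x \<in> insert 1 S \<Longrightarrow> x > 0"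
    unfolding S_def using b1pos Bk BUs0 by (auto intro!: divide_pos_pos)
  have bb0: "bb > 0" unfolding bb_def using finS Spos by (simp add: Min_gr_iff)
  have bb1: "bb \<le> 1" unfolding bb_def using finS by simp
  have bbS: "\<And>U. k < U \<Longrightarrow> U < N 1 \<Longrightarrow> bb \<le> B U / (B Us + 1)"
    unfolding bb_def S_def using finS by (intro Min_le) auto
  show ?thesis
  proof (rule exI[of _ bb], rule conjI[OF bb0], intro allI impI)
    fix \<beta> :: real assume \<beta>: "0 < \<beta> \<and> \<beta> < bb"
    show "Ustar N P al lam T < N 1 \<and>
           (\<forall>U < N 1. Fout N P al lam T (Ustar N P al lam T) \<beta> \<le> Fout N P al lam T U \<beta>)"
    proof (intro conjI allI impI)
      show "Ustar N P al lam T < N 1" using Usk asm unfolding Us_def[symmetric] k_def by simp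
    next
      fix U assume U: "U < N 1"
      have FUs: "Fout N P al lam T Us \<beta> = B Us * \<beta> ^ N 2"
        unfolding Fout_def B_def[symmetric] using N1[OF Usk] by simp
      show "Fout N P al lam T (Ustar N P al lam T) \<beta> \<le> Fout N P al lam T U \<beta>"
      proof (cases "U \<le> k")
        case True
        have "Fout N P al lam T U \<beta> = B U * \<beta> ^ N 2"
          unfolding Fout_def B_def[symmetric] using N1[OF True] by simp
        then show ?thesis using FUs low[OF True] \<beta> Us_def by (simp add: mult_right_mono)
      next
        case False
        define e where "e = N 1 - U"
        have e: "min (N 1 - U) (N 2) = e" "e + 1 \<le> N 2" using False U asm unfolding e_def k_def by auto
        have FU: "Fout N P al lam T U \<beta> = B U * \<beta> ^ e"
          unfolding Fout_def B_def[symmetric] using e by simp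
        have b01: "\<beta> < 1" "\<beta> > 0" using \<beta> bb1 by auto
        have "\<beta> ^ N 2 \<le> \<beta> ^ (e + 1)" using b01 e by (intro power_decreasing) auto
        then have "B Us * \<beta> ^ N 2 \<le> B Us * (\<beta> * \<beta> ^ e)" using BUs0 by (simp add: mult_left_mono)
        also have "\<dots> \<le> B Us * (B U / (B Us + 1) * \<beta> ^ e)"
          using bbS[of U] False U \<beta> BUs0 b01
          by (intro mult_left_mono mult_right_mono) auto
        also have "\<dots> \<le> B U * \<beta> ^ e"
        proof -
          have BU: "B U > 0" using Bk b1pos False by simp
          have "B Us * (B U / (B Us + 1)) \<le> B U"
            using BU BUs0 by (simp add: field_simps)
          then have "(B Us * (B U / (B Us + 1))) * \<beta> ^ e \<le> B U * \<beta> ^ e"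
            using b01 by (intro mult_right_mono) auto
          then show ?thesis by (simp only: mult.assoc)
        qed
        finally show ?thesis using FUs FU Us_def by simp
      qed
    qed
  qed
qed

end
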